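(* Fix $\alpha\in(0,\pi/4]$, $s>1$ and $\rho>0$, and suppose the execution of MaxHedge with these parameters is valid. If MaxHedge fails, then every deterministic online algorithm has competitive ratio greater than $\rho$.
   Context: A drone at $(t_x,t_y)$, $t_y\ge0$, covers $[t_x-t_y\tan\alpha,t_x+t_y\tan\alpha]$ on the $x$-axis; $\mathrm{FC}(X_0,\dots,X_i)$ denotes the set of positions covering $X_0,\dots,X_i$. For an input $X_0=(0,0),X_1,\dots,X_n$ on the $x$-axis, an online algorithm responds with $P_0=X_0$ and $P_i\in\mathrm{FC}(X_0,\dots,X_i)$ chosen knowing only $X_0,\dots,X_i$; its cost is $\sum_i|P_iP_{i+1}|$; OPT is the minimum cost with the input known in advance; the competitive ratio is the supremum over inputs of cost/OPT. Fix $s>1$ and the requests $X_0=(0,0)$, $X_i=(2(-s)^{i-1},0)$, $i\ge1$. Let $T_i$ be the apex of $\mathrm{FC}(X_0,\dots,X_i)$: $T_0=X_0$, $T_1=(1,\cot\alpha)$, $T_i=((-s)^{i-2}(1-s),s^{i-2}(1+s)\cot\alpha)$ for $i\ge2$, and $o_i=|X_0T_i|$ (the optimal offline cost for $X_0,\dots,X_i$; $o_0=0$). MaxHedge with parameter $\rho$: $Z_0=X_0$; for $i\ge1$, $Z_i=T_i+z_i(T_{i+1}-T_i)$, $z_i\ge0$, is the intersection of the halfline from $T_i$ through $T_{i+1}$ with the circle centred at $Z_{i-1}$ of radius $\rho(o_i-o_{i-1})$; if no such point exists MaxHedge fails in round $i$. The domain is the set of rounds before failure (all rounds if it never fails). The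 execution is valid if for every round $i\ge1$ in the domain, $Z_i$ lies on the same side of the $y$-axis as $T_i$. *)

theory Defs
  imports Complex_Main "HOL-Library.Extended_Real"
begin

text \<open>Points of the plane are pairs (x, y); requests lie on the x-axis and are
  represented by their x-coordinate.\<close>

definition edist :: "real \<times> real \<Rightarrow> real \<times> real \<Rightarrow> real" where
  "edist p q = sqrt ((fst p - fst q)^2 + (snd p - snd q)^2)"

definition covers :: "real \<Rightarrow> real \<times> real \<Rightarrow> real \<Rightarrow> bool" where
  "covers \<alpha> t x \<longleftrightarrow> snd t \<ge> 0 \<and> fst t - snd t * tan \<alpha> \<le> x \<and> x \<le> fst t + snd t * tan \<alpha>"

definition FC :: "real \<Rightarrow> real list \<Rightarrow> (real \<times> real) set" where
  "FC \<alpha> rs = {t. snd t \<ge> 0 \<and> (\<forall>x \<in> set rs. covers \<alpha> t x)}"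

text \<open>An input is X_0 = (0,0) followed by X_1..X_n, given as the list xs of the
  x-coordinates of X_1..X_n; the full request list is 0 # xs.
  A deterministic online algorithm is a map from the prefix X_0..X_i seen so far
  to the response P_i.\<close>
definition online_alg :: "real \<Rightarrow> (real list \<Rightarrow> real \<times> real) \<Rightarrow> bool" where
  "online_alg \<alpha> A \<longleftrightarrow> A [0] = (0, 0) \<and> (\<forall>xs. A (0 # xs) \<in> FC \<alpha> (0 # xs))"

definition alg_cost :: "(real list \<Rightarrow> real \<times> real) \<Rightarrow> real list \<Rightarrow> real" where
  "alg_cost A xs = (\<Sum>i<length xs. edist (A (take (Suc i) (0 # xs))) (A (take (Suc (Suc i)) (0 # xs))))"

definition OPT :: "real \<Rightarrow> real list \<Rightarrow> real" where
  "OPT \<alpha> xs = Inf {(\<Sum>i<length xs. edist (P i) (P (Suc i))) | P.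
      P 0 = (0, 0) \<and> (\<forall>i \<le> length xs. P i \<in> FC \<alpha> (take (Suc i) (0 # xs)))}"

definition comp_ratio :: "real \<Rightarrow> (real list \<Rightarrow> real \<times> real) \<Rightarrow> ereal" where
  "comp_ratio \<alpha> A = (SUP xs \<in> {xs. OPT \<alpha> xs > 0}. ereal (alg_cost A xs / OPT \<alpha> xs))"

text \<open>The apexes T_i for the requests X_0 = (0,0), X_i = (2(-s)^(i-1), 0).\<close>
definition T :: "real \<Rightarrow> real \<Rightarrow> nat \<Rightarrow> real \<times> real" where
  "T \<alpha> s i = (if i = 0 then (0, 0) else if i = 1 then (1, cot \<alpha>)
       else ((-s)^(i-2) * (1 - s), s^(i-2) * (1 + s) * cot \<alpha>))"

definition o_cost :: "real \<Rightarrow> real \<Rightarrow> nat \<Rightarrow> real" where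
  "o_cost \<alpha> s i = edist (0, 0) (T \<alpha> s i)"

definition hl_pt :: "real \<Rightarrow> real \<Rightarrow> nat \<Rightarrow> real \<Rightarrow> real \<times> real" where
  "hl_pt \<alpha> s i z = (fst (T \<alpha> s i) + z * (fst (T \<alpha> s (Suc i)) - fst (T \<alpha> s i)),
                     snd (T \<alpha> s i) + z * (snd (T \<alpha> s (Suc i)) - snd (T \<alpha> s i)))"

definition mh_ok :: "real \<Rightarrow> real \<Rightarrow> real \<Rightarrow> nat \<Rightarrow> real \<times> real \<Rightarrow> real \<Rightarrow> bool" where
  "mh_ok \<alpha> s \<rho> i Zprev z \<longleftrightarrow> z \<ge> 0 \<and>
     edist (hl_pt \<alpha> s i z) Zprev = \<rho> * (o_cost \<alpha> s i - o_cost \<alpha> s (i - 1))"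

text \<open>MaxHedge points Z_i (meaningful for rounds in the domain; the intersection
  point is unique there under the standing assumptions).\<close>
fun Z :: "real \<Rightarrow> real \<Rightarrow> real \<Rightarrow> nat \<Rightarrow> real \<times> real" where
  "Z \<alpha> s \<rho> 0 = (0, 0)"
| "Z \<alpha> s \<rho> (Suc i) = hl_pt \<alpha> s (Suc i) (SOME z. mh_ok \<alpha> s \<rho> (Suc i) (Z \<alpha> s \<rho> i) z)"

definition fails_in :: "real \<Rightarrow> real \<Rightarrow> real \<Rightarrow> nat \<Rightarrow> bool" where
  "fails_in \<alpha> s \<rho> i \<longleftrightarrow> i \<ge> 1 \<and> \<not> (\<exists>z. mh_ok \<alpha> s \<rho> i (Z \<alpha> s \<rho> (i - 1)) z)"

definition in_domain :: "real \<Rightarrow> real \<Rightarrow> real \<Rightarrow> nat \<Rightarrow> bool" where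
  "in_domain \<alpha> s \<rho> i \<longleftrightarrow> (\<forall>j \<le> i. \<not> fails_in \<alpha> s \<rho> j)"

definition mh_fails :: "real \<Rightarrow> real \<Rightarrow> real \<Rightarrow> bool" where
  "mh_fails \<alpha> s \<rho> \<longleftrightarrow> (\<exists>i. fails_in \<alpha> s \<rho> i)"

definition mh_valid :: "real \<Rightarrow> real \<Rightarrow> real \<Rightarrow> bool" where
  "mh_valid \<alpha> s \<rho> \<longleftrightarrow> (\<forall>i \<ge> 1. in_domain \<alpha> s \<rho> i \<longrightarrow>
      sgn (fst (Z \<alpha> s \<rho> i)) = sgn (fst (T \<alpha> s i)))"

end

theory Submission
  imports Defs
begin


lemma key_scalar:
  fixes A B C D p m t s0 N M :: real
  assumes N: "N = 1 + t^2" and M: "M = 1 - t^2" and t: "0 < t" "t \<le> 1"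
    and A: "A > 0" and B: "B \<ge> 0" and C: "C > 0" and D: "D \<ge> 0" and BD: "B*D \<le> A*C"
    and nd: "A*M + B*N > 0" and p: "p \<ge> 0" and s0: "s0 \<ge> 0"
    and H: "sqrt (A^2*N + 2*A*B*M + B^2*N) * s0 \<le> -p*(A*N+B*M) + m*(A*M+B*N)"
  shows "sqrt (C^2*N + 2*C*D*M + D^2*N) * s0 \<le> -p*(C*M+D*N) + m*(C*N+D*M)"
proof -
  define g1 where "g1 = sqrt (A^2*N + 2*A*B*M + B^2*N)"
  define g2 where "g2 = sqrt (C^2*N + 2*C*D*M + D^2*N)"
  define X where "X = -p*(A*N+B*M) + m*(A*M+B*N)"
  define Y where "Y = -p*(C*M+D*N) + m*(C*N+D*M)"
  define K where "K = N^2 - M^2"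
  define P1 where "P1 = C*N+D*M"
  define Q1 where "Q1 = A*M+B*N"
  have Npos: "N > 0" using N by (simp add: add_pos_nonneg)
  have M0: "M \<ge> 0" using M t by (simp add: power_le_one)
  have MN: "M < N" using M N t by simp
  have K0: "K \<ge> 0" using K_def M0 MN by (simp add: power_mono)
  have r1: "A^2*N + 2*A*B*M + B^2*N \<ge> 0" using A B M0 Npos by (intro add_nonneg_nonneg mult_nonneg_nonneg) auto
  have r2: "C^2*N + 2*C*D*M + D^2*N \<ge> 0" using C D M0 Npos by (intro add_nonneg_nonneg mult_nonneg_nonneg) auto
  have g1pos: "g1 > 0" unfolding g1_def
    using A B M0 Npos by (intro real_sqrt_gt_zero add_pos_nonneg mult_nonneg_nonneg mult_pos_pos) auto
  have g2nn: "g2 \<ge> 0" unfolding g2_def using r2 by simp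
  have g1sq: "g1^2 = A^2*N + 2*A*B*M + B^2*N" unfolding g1_def using r1 by simp
  have g2sq: "g2^2 = C^2*N + 2*C*D*M + D^2*N" unfolding g2_def using r2 by simp
  have e1: "g1^2 * N = Q1^2 + A^2*K" unfolding g1sq K_def Q1_def by (simp add: algebra_simps power2_eq_square)
  have e2: "g2^2 * N = P1^2 + D^2*K" unfolding g2sq K_def P1_def by (simp add: algebra_simps power2_eq_square)
  have f0: "A*P1 - D*Q1 = N*(A*C - B*D)" unfolding P1_def Q1_def by (simp add: algebra_simps)
  have f1: "A*P1 + D*Q1 \<ge> 0" using A C D B M0 Npos unfolding P1_def Q1_def by simp
  have "N * ((g1*P1)^2 - (g2*Q1)^2) = (g1^2*N)*P1^2 - (g2^2*N)*Q1^2"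
    by (simp add: power_mult_distrib algebra_simps)
  also have "\<dots> = K*(A*P1 - D*Q1)*(A*P1 + D*Q1)" unfolding e1 e2 by (simp add: algebra_simps power2_eq_square)
  also have "\<dots> \<ge> 0" using K0 f0 f1 Npos BD by simp
  finally have "(g2*Q1)^2 \<le> (g1*P1)^2" using Npos
    by (simp add: zero_le_mult_iff)
  moreover have "P1 \<ge> 0" using C D M0 Npos unfolding P1_def by simp
  ultimately have F: "g2*Q1 \<le> g1*P1"
    using g1pos by (metis power2_le_imp_le less_imp_le mult_nonneg_nonneg)
  have X0: "X \<ge> 0" using H s0 g1pos unfolding X_def g1_def[symmetric]
    by (meson mult_nonneg_nonneg order_trans less_imp_le)
  have ident: "Q1*Y = X*P1 + p*(A*C-B*D)*K"
    unfolding X_def Y_def K_def P1_def Q1_def by (simp add: algebra_simps power2_eq_square)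
  have "Q1*(g1*Y - g2*X) = X*(g1*P1 - g2*Q1) + p*g1*(A*C-B*D)*K"
  proof -
    have "Q1*(g1*Y - g2*X) = g1*(Q1*Y) - g2*X*Q1" by (simp add: algebra_simps)
    also have "\<dots> = g1*(X*P1 + p*(A*C-B*D)*K) - g2*X*Q1" using ident by simp
    finally show ?thesis by (simp add: algebra_simps)
  qed
  also have "\<dots> \<ge> 0" using X0 F p g1pos BD K0 by simp
  finally have "g1*Y - g2*X \<ge> 0" using nd unfolding Q1_def by (simp add: zero_le_mult_iff)
  hence "g2*X \<le> g1*Y" by simp
  moreover have "g1*(g2*s0) \<le> g2*X" using H g2nn unfolding X_def g1_def[symmetric]
    by (metis mult.left_commute mult_left_mono)
  ultimately have "g1*(g2*s0) \<le> g1*Y" by linarith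
  thus ?thesis using g1pos unfolding g2_def Y_def by simp
qed




lemma deg1:
  fixes A A' B' U1 U2 D1 D2 s0 s1 :: real
  assumes A: "A > 0" and A': "A' > 0" and B': "B' \<ge> 0" and Dc: "\<bar>D1\<bar> \<le> D2"
    and s0: "s0 \<ge> 0" and s1: "s1 \<ge> 0"
    and H1: "sqrt (A^2 + A^2) * s0 \<le> (-A)*U1 + A*U2"
    and H2: "s1 = s0 + sqrt (A^2 + A^2) - sqrt ((D1 - A + U1)^2 + (D2 + A + U2)^2)"
    and H3: "(U1 = 0 \<and> U2 = 0) \<or> sqrt ((A'-B')^2 + (A'+B')^2) * s0 \<le> (A'-B')*U1 + (A'+B')*U2"
  shows "D1 = 0 \<and> D2 = 0 \<and> s1 = 0"
proof -
  define r where "r = sqrt 2"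
  have r0: "r > 0" and r2: "r^2 = 2" unfolding r_def by auto
  have sA: "sqrt (A^2 + A^2) = A * r" unfolding r_def using A
    by (simp add: real_sqrt_mult power2_eq_square)
  define ua where "ua = U2 - U1"
  define ub where "ub = U1 + U2"
  define V1 where "V1 = D1 - A + U1"
  define V2 where "V2 = D2 + A + U2"
  define nV where "nV = sqrt (V1^2 + V2^2)"
  have nV0: "nV \<ge> 0" unfolding nV_def by simp
  have nVsq: "nV^2 = V1^2 + V2^2" unfolding nV_def by simp
  have "A * (r * s0) \<le> A * ua" using H1 unfolding sA ua_def by (simp add: algebra_simps)
  hence h1: "r * s0 \<le> ua" using A by (simp add: mult_le_cancel_left_pos)
  have ua0: "ua \<ge> 0" using h1 r0 s0 by (meson mult_nonneg_nonneg order_trans less_imp_le)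
  have h2: "nV \<le> s0 + A * r" using H2 s1 unfolding sA nV_def V1_def V2_def by linarith
  have "r * nV \<le> r * (s0 + A * r)" using h2 r0 by (simp add: mult_left_mono)
  also have "\<dots> = r * s0 + A * r^2" by (simp add: algebra_simps power2_eq_square)
  also have "\<dots> \<le> ua + 2*A" using h1 r2 by simp
  finally have h3: "r * nV \<le> ua + 2*A" .
  have "(r*nV)^2 \<le> (ua + 2*A)^2" using h3 r0 nV0 by (intro power_mono) auto
  hence h4: "2*(V1^2+V2^2) \<le> (ua + 2*A)^2" using r2 nVsq by (simp add: power_mult_distrib)
  have id: "2*(V1^2+V2^2) = ((D2 - D1) + (ua + 2*A))^2 + (D1 + D2 + ub)^2"
    unfolding V1_def V2_def ua_def ub_def by (simp add: algebra_simps power2_eq_square)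
  define x where "x = D2 - D1"
  define y where "y = ua + 2*A"
  define z where "z = D1 + D2 + ub"
  have x0: "x \<ge> 0" using Dc unfolding x_def by linarith
  have y0: "y \<ge> 0" using ua0 A unfolding y_def by simp
  have "(x + y)^2 + z^2 \<le> y^2" using h4 id unfolding x_def y_def z_def by simp
  hence "x*(x + 2*y) + z^2 \<le> 0" by (simp add: algebra_simps power2_eq_square)
  moreover have "x*(x+2*y) \<ge> 0" using x0 y0 by simp
  moreover have "z^2 \<ge> 0" by simp
  ultimately have xz: "x*(x+2*y) = 0" "z^2 = 0" by linarith+
  have "x = 0"
  proof (rule ccontr)
    assume "x \<noteq> 0" hence "x > 0" using x0 by simp
    hence "x*(x+2*y) > 0" using y0 by simp
    thus False using xz by simp
  qed
  have z0: "z = 0" using xz by simp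
  have nVeq: "nV^2 = (y/r)^2" using id nVsq \<open>x = 0\<close> z0 r2 unfolding x_def y_def z_def
    by (simp add: power_divide)
  have "nV = y / r" using nVeq nV0 r0 y0 by (simp add: power2_eq_iff_nonneg)
  hence s1eq: "s1 = s0 + A*r - y/r" using H2 unfolding sA nV_def V1_def V2_def by simp
  have yr: "y / r = ua / r + A * r" unfolding y_def using r0 r2
    by (simp add: field_simps power2_eq_square)
  have s0le: "s0 \<le> ua / r" using h1 r0 by (simp add: field_simps mult.commute)
  have s1z: "s1 = 0" using s1eq yr s0le s1 by linarith
  have s0eq: "s0 = ua / r" using s1eq yr s1 s0le by linarith
  have Deq: "D1 = D2" using \<open>x = 0\<close> unfolding x_def by simp
  have ubrel: "2*D2 + ub = 0" using z0 Deq unfolding z_def by simp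
  have "ub \<ge> 0" using H3
  proof
    assume "U1 = 0 \<and> U2 = 0" thus "ub \<ge> 0" unfolding ub_def by simp
  next
    assume H: "sqrt ((A'-B')^2 + (A'+B')^2) * s0 \<le> (A'-B')*U1 + (A'+B')*U2"
    have "r * B' \<le> sqrt ((A'-B')^2 + (A'+B')^2)"
    proof -
      have "(r*B')^2 \<le> (A'-B')^2 + (A'+B')^2" using r2
        by (simp add: power_mult_distrib algebra_simps power2_eq_square)
      thus ?thesis using r0 B' by (simp add: real_le_rsqrt)
    qed
    hence "r*B'*s0 \<le> (A'-B')*U1 + (A'+B')*U2" using H s0 by (meson mult_right_mono order_trans)
    moreover have "r*B'*s0 = B'*ua" using s0eq r0 by (simp add: field_simps)
    ultimately have "B'*ua \<le> A'*ub + B'*ua" unfolding ua_def ub_def by (simp add: algebra_simps)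
    hence "A'*ub \<ge> 0" by simp
    thus "ub \<ge> 0" using A' by (simp add: zero_le_mult_iff)
  qed
  hence "D2 = 0" using ubrel Dc by linarith
  thus ?thesis using Deq s1z by simp
qed




definition Xr :: "real \<Rightarrow> nat \<Rightarrow> real" where "Xr s n = 2 * (-s)^n"
definition xsq :: "real \<Rightarrow> nat \<Rightarrow> real list" where "xsq s i = map (Xr s) [0..<i]"
definition LL :: "real \<Rightarrow> real \<Rightarrow> nat \<Rightarrow> real" where
  "LL \<alpha> s j = (if j = 0 then cot \<alpha> else if j = 1 then s * cot \<alpha> else s^(j-2)*(s^2-1)*cot \<alpha>)"

locale geo =
  fixes \<alpha> s :: real
  assumes a0: "0 < \<alpha>" and a1: "\<alpha> \<le> pi/4" and s1: "s > 1"
begin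

definition "tt = tan \<alpha>"

lemma tt_pos: "tt > 0" unfolding tt_def using a0 a1 by (intro tan_gt_zero) auto
lemma tt_le1: "tt \<le> 1"
proof -
  have "tan \<alpha> \<le> tan (pi/4)" using a0 a1 by (intro tan_mono_le) auto
  thus ?thesis unfolding tt_def by (simp add: tan_45)
qed
lemma cot_tt: "cot \<alpha> = 1 / tt"
proof -
  have "sin \<alpha> > 0" using a0 a1 by (intro sin_gt_zero) (auto simp: pi_gt_zero)
  moreover have "cos \<alpha> > 0" using a0 a1 by (intro cos_gt_zero) auto
  ultimately show ?thesis unfolding tt_def cot_def tan_def by simp
qed
lemma cot_mult: "cot \<alpha> * tt = 1" using cot_tt tt_pos by simp

lemma LL_pos: "LL \<alpha> s j > 0"
  using s1 tt_pos cot_tt by (auto simp: LL_def)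

lemma negpow: "(-s)^n = (-1)^n * s^n" by (rule power_minus)

lemma Tstep:
  "fst (T \<alpha> s (Suc j)) = fst (T \<alpha> s j) + LL \<alpha> s j * (-1)^j * tt"
  "snd (T \<alpha> s (Suc j)) = snd (T \<alpha> s j) + LL \<alpha> s j"
proof -
  have "fst (T \<alpha> s (Suc j)) = fst (T \<alpha> s j) + LL \<alpha> s j * (-1)^j * tt \<and>
        snd (T \<alpha> s (Suc j)) = snd (T \<alpha> s j) + LL \<alpha> s j"
  proof (cases j)
    case 0 thus ?thesis using cot_mult by (simp add: T_def LL_def)
  next
    case (Suc n) note j = this
    show ?thesis
    proof (cases n)
      case 0 thus ?thesis using j cot_mult by (simp add: T_def LL_def algebra_simps)
    next
      case (Suc n') 
      have e0: "s^n' * (s^2-1) * cot \<alpha> * (-1)^n' * tt = (-1)^n' * s^n' * (s^2-1) * (cot \<alpha> * tt)"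
        by (simp add: algebra_simps)
      have e1: "(-s)^(Suc n') * (1 - s) = (-s)^n' * (1-s) + s^n' * (s^2-1) * cot \<alpha> * (-1)^n' * tt"
        unfolding e0 cot_mult by (simp add: negpow algebra_simps power2_eq_square)
      have e2: "s^(Suc n') * (1 + s) * cot \<alpha> = s^n' * (1+s) * cot \<alpha> + s^n' * (s^2-1) * cot \<alpha>"
        by (simp add: algebra_simps power2_eq_square)
      show ?thesis using j Suc e1 e2 by (simp add: T_def LL_def)
    qed
  qed
  thus "fst (T \<alpha> s (Suc j)) = fst (T \<alpha> s j) + LL \<alpha> s j * (-1)^j * tt"
        "snd (T \<alpha> s (Suc j)) = snd (T \<alpha> s j) + LL \<alpha> s j" by auto
qed

lemma T_snd_nonneg: "snd (T \<alpha> s j) \<ge> 0"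
  using s1 cot_tt tt_pos by (auto simp: T_def)

lemma set_xsq0: "set (xsq s i) = {Xr s n | n. n < i}"
  by (auto simp: xsq_def)
lemma set_xsq: "set (0 # xsq s i) = insert 0 {Xr s n | n. n < i}"
  by (auto simp: xsq_def)

lemma take_xsq: "j \<le> i \<Longrightarrow> take (Suc j) (0 # xsq s i) = 0 # xsq s j"
  by (simp add: xsq_def take_map)

lemma length_xsq[simp]: "length (xsq s i) = i" by (simp add: xsq_def)

lemma extremes:
  assumes "j \<ge> 1"
  shows "fst (T \<alpha> s j) - snd (T \<alpha> s j) * tt \<in> set (0 # xsq s j)"
        "fst (T \<alpha> s j) + snd (T \<alpha> s j) * tt \<in> set (0 # xsq s j)"
proof -
  have "fst (T \<alpha> s j) - snd (T \<alpha> s j) * tt \<in> set (0 # xsq s j) \<and>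
        fst (T \<alpha> s j) + snd (T \<alpha> s j) * tt \<in> set (0 # xsq s j)"
  proof (cases "j = 1")
    case True thus ?thesis using cot_mult by (auto simp: T_def xsq_def Xr_def)
  next
    case False
    then obtain n where j: "j = n + 2" using assms by (metis add_2_eq_Suc' le_add_diff_inverse2 less_one nat_less_le Suc_1 add.commute le_neq_implies_less not_less_eq_eq plus_1_eq_Suc)
    have fT: "fst (T \<alpha> s j) = (-1)^n * s^n * (1-s)" and sT: "snd (T \<alpha> s j) * tt = s^n * (1+s)"
      using j cot_mult by (auto simp: T_def negpow)
    have m1: "Xr s n \<in> set (0 # xsq s j)" "Xr s (Suc n) \<in> set (0 # xsq s j)" using j by (auto simp: set_xsq set_xsq0)
    show ?thesis
    proof (cases "even n")
      case True
      have "fst (T \<alpha> s j) - snd (T \<alpha> s j) * tt = Xr s (Suc n)"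
           "fst (T \<alpha> s j) + snd (T \<alpha> s j) * tt = Xr s n"
        using True fT sT by (auto simp: Xr_def negpow algebra_simps)
      thus ?thesis using m1 by simp
    next
      case False
      have "fst (T \<alpha> s j) - snd (T \<alpha> s j) * tt = Xr s n"
           "fst (T \<alpha> s j) + snd (T \<alpha> s j) * tt = Xr s (Suc n)"
        using False fT sT by (auto simp: Xr_def negpow algebra_simps)
      thus ?thesis using m1 by simp
    qed
  qed
  thus "fst (T \<alpha> s j) - snd (T \<alpha> s j) * tt \<in> set (0 # xsq s j)"
       "fst (T \<alpha> s j) + snd (T \<alpha> s j) * tt \<in> set (0 # xsq s j)" by auto
qed

lemma cone:
  assumes "j \<ge> 1" and "P \<in> FC \<alpha> (0 # xsq s j)"
  shows "\<bar>fst P - fst (T \<alpha> s j)\<bar> \<le> tt * (snd P - snd (T \<alpha> s j))"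
proof -
  have c1: "covers \<alpha> P (fst (T \<alpha> s j) - snd (T \<alpha> s j) * tt)"
   and c2: "covers \<alpha> P (fst (T \<alpha> s j) + snd (T \<alpha> s j) * tt)"
    using assms extremes[OF assms(1)] unfolding FC_def by auto
  show ?thesis using c1 c2 unfolding covers_def tt_def[symmetric] by (auto simp: algebra_simps)
qed

lemma T_covers:
  assumes "i \<ge> 1" and "x \<in> set (0 # xsq s i)"
  shows "\<bar>x - fst (T \<alpha> s i)\<bar> \<le> snd (T \<alpha> s i) * tt"
proof (cases "i = 1")
  case True thus ?thesis using assms cot_mult by (auto simp: T_def xsq_def Xr_def)
next
  case False
  then obtain n where j: "i = n + 2" using assms(1) by (metis add_2_eq_Suc' le_add_diff_inverse2 less_one nat_less_le Suc_1 add.commute le_neq_implies_less not_less_eq_eq plus_1_eq_Suc)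
  have fT: "fst (T \<alpha> s i) = (-1)^n * s^n * (1-s)" and sT: "snd (T \<alpha> s i) * tt = s^n * (1+s)"
    using j cot_mult by (auto simp: T_def negpow)
  have afT: "\<bar>fst (T \<alpha> s i)\<bar> = s^n * (s - 1)" using fT s1 by (simp add: abs_mult power_abs)
  have sn: "s^n > 0" using s1 by simp
  show ?thesis
  proof -
    consider "x = 0" | m where "m < i" "x = Xr s m" using assms(2) by (auto simp: set_xsq set_xsq0)
    thus ?thesis
    proof cases
      case 1
      have "\<bar>fst (T \<alpha> s i)\<bar> \<le> s^n * (1+s)" using afT sn by (simp add: algebra_simps)
      thus ?thesis using 1 sT by simp
    next
      case 2
      show ?thesis
      proof (cases "m = Suc n")
        case True
        have "x - fst (T \<alpha> s i) = - ((-1)^n * s^n * (1 + s))" using 2 True fT by (simp add: Xr_def negpow algebra_simps)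
        thus ?thesis using sT s1 by (simp add: abs_mult power_abs)
      next
        case False
        hence "m \<le> n" using 2 j by simp
        hence "s^m \<le> s^n" using s1 by (simp add: power_increasing)
        hence "\<bar>x\<bar> \<le> 2 * s^n" using 2 s1 by (simp add: Xr_def abs_mult power_abs)
        hence "\<bar>x - fst (T \<alpha> s i)\<bar> \<le> 2 * s^n + s^n * (s - 1)" using afT by linarith
        thus ?thesis using sT by (simp add: algebra_simps)
      qed
    qed
  qed
qed

lemma T_in_FC: "i \<ge> 1 \<Longrightarrow> m \<le> i \<Longrightarrow> T \<alpha> s i \<in> FC \<alpha> (0 # xsq s m)"
proof -
  assume a: "i \<ge> 1" "m \<le> i"
  have sub: "set (0 # xsq s m) \<subseteq> set (0 # xsq s i)" using a by (auto simp: set_xsq0)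
  have "covers \<alpha> (T \<alpha> s i) x" if "x \<in> set (0 # xsq s m)" for x
  proof -
    have "x \<in> set (0 # xsq s i)" using sub that by blast
    hence "\<bar>x - fst (T \<alpha> s i)\<bar> \<le> snd (T \<alpha> s i) * tt" by (rule T_covers[OF a(1)])
    thus ?thesis using T_snd_nonneg[of i] unfolding covers_def tt_def by (auto simp: abs_le_iff)
  qed
  thus ?thesis using T_snd_nonneg[of i] unfolding FC_def by blast
qed

end



lemma sqrt_ge_abs2: "\<bar>y\<bar> \<le> sqrt (x^2 + y^2)"
  using real_sqrt_sum_squares_ge2[of "\<bar>y\<bar>" x] by simp

lemma edist_nonneg: "edist p q \<ge> 0" unfolding edist_def by simp

lemma take_xsq': "j \<le> i \<Longrightarrow> take j (xsq s i) = xsq s j"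
  by (simp add: xsq_def take_map)

locale alg = geo +
  fixes \<rho> :: real and Alg :: "real list \<Rightarrow> real \<times> real"
  assumes rho0: "\<rho> > 0" and oa: "online_alg \<alpha> Alg" and cr: "comp_ratio \<alpha> Alg \<le> ereal \<rho>"
begin

definition "PP j = Alg (0 # xsq s j)"
definition "cc j = (\<Sum>m<j. edist (PP m) (PP (Suc m)))"
definition "oo j = o_cost \<alpha> s j"
definition "sig j = \<rho> * oo j - cc j"

lemma cc_Suc: "cc (Suc j) = cc j + edist (PP j) (PP (Suc j))"
  unfolding cc_def by simp

lemma sig_Suc: "sig (Suc j) = sig j + \<rho> * (oo (Suc j) - oo j) - edist (PP j) (PP (Suc j))"
  unfolding sig_def cc_Suc by (simp add: algebra_simps)

lemma PP0: "PP 0 = (0, 0)" using oa unfolding online_alg_def PP_def by (simp add: xsq_def)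

lemma PP_FC: "PP j \<in> FC \<alpha> (0 # xsq s j)" using oa unfolding online_alg_def PP_def by simp

lemma PP_cone: "j \<ge> 1 \<Longrightarrow> \<bar>fst (PP j) - fst (T \<alpha> s j)\<bar> \<le> tt * (snd (PP j) - snd (T \<alpha> s j))"
  using cone PP_FC by blast

lemma oo0: "oo 0 = 0" unfolding oo_def o_cost_def edist_def by (simp add: T_def)

lemma alg_cost_eq: "alg_cost Alg (xsq s i) = cc i"
  unfolding alg_cost_def cc_def PP_def length_xsq
  by (rule sum.cong) (auto simp: take_xsq')

definition "OS i = {(\<Sum>m<length (xsq s i). edist (P m) (P (Suc m))) | P.
      P 0 = (0, 0) \<and> (\<forall>m \<le> length (xsq s i). P m \<in> FC \<alpha> (take (Suc m) (0 # xsq s i)))}"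

lemma OPT_OS: "OPT \<alpha> (xsq s i) = Inf (OS i)" unfolding OPT_def OS_def by simp

lemma OS_mem:
  assumes "i \<ge> 1"
  shows "oo i \<in> OS i"
proof -
  define P where "P = (\<lambda>m::nat. if m = 0 then (0::real, 0::real) else T \<alpha> s i)"
  have "P 0 = (0,0)" unfolding P_def by simp
  moreover have "P m \<in> FC \<alpha> (take (Suc m) (0 # xsq s i))" if "m \<le> i" for m
  proof (cases "m = 0")
    case True thus ?thesis unfolding P_def FC_def covers_def by simp
  next
    case False thus ?thesis using that T_in_FC[OF assms that] by (simp add: P_def take_xsq')
  qed
  moreover have "(\<Sum>m<i. edist (P m) (P (Suc m))) = oo i"
  proof -
    obtain i' where i': "i = Suc i'" using assms by (cases i) auto
    have "(\<Sum>m<i. edist (P m) (P (Suc m))) = edist (P 0) (P 1) + (\<Sum>m<i'. edist (P (Suc m)) (P (Suc (Suc m))))"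
      unfolding i' sum.lessThan_Suc_shift by simp
    also have "\<dots> = oo i" unfolding P_def oo_def o_cost_def edist_def by simp
    finally show ?thesis .
  qed
  ultimately show ?thesis unfolding OS_def length_xsq by (intro CollectI exI[of _ P]) auto
qed

lemma OS_lower:
  assumes "i \<ge> 1" and "x \<in> OS i"
  shows "x \<ge> 1 / tt"
proof -
  obtain P where x: "x = (\<Sum>m<i. edist (P m) (P (Suc m)))" and P0: "P 0 = (0,0)"
    and PF: "\<forall>m \<le> i. P m \<in> FC \<alpha> (take (Suc m) (0 # xsq s i))"
    using assms(2) unfolding OS_def length_xsq by blast
  have "P 1 \<in> FC \<alpha> (0 # xsq s 1)" using PF assms(1) take_xsq[of 1 i] by auto
  hence "covers \<alpha> (P 1) 0" "covers \<alpha> (P 1) 2" unfolding FC_def by (auto simp: xsq_def Xr_def)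
  hence "snd (P 1) * tt \<ge> 1" unfolding covers_def tt_def by simp
  hence sP: "snd (P 1) \<ge> 1 / tt" using tt_pos by (simp add: field_simps)
  obtain i' where i': "i = Suc i'" using assms by (cases i) auto
  have "x = edist (P 0) (P 1) + (\<Sum>m<i'. edist (P (Suc m)) (P (Suc (Suc m))))"
    unfolding x i' sum.lessThan_Suc_shift by simp
  moreover have "(\<Sum>m<i'. edist (P (Suc m)) (P (Suc (Suc m)))) \<ge> 0" by (intro sum_nonneg) (simp add: edist_nonneg)
  moreover have "edist (P 0) (P 1) \<ge> snd (P 1)" unfolding edist_def P0
    using sqrt_ge_abs2[of "0 - snd (P 1)" "0 - fst (P 1)"] by simp
  ultimately show ?thesis using sP by linarith
qed

lemma OPT_pos: "i \<ge> 1 \<Longrightarrow> OPT \<alpha> (xsq s i) > 0"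
proof -
  assume i: "i \<ge> 1"
  have "Inf (OS i) \<ge> 1 / tt" using OS_mem[OF i] OS_lower[OF i] by (intro cInf_greatest) auto
  thus ?thesis using tt_pos OPT_OS by (metis divide_pos_pos order_less_le_trans zero_less_one)
qed

lemma OPT_le: "i \<ge> 1 \<Longrightarrow> OPT \<alpha> (xsq s i) \<le> oo i"
proof -
  assume i: "i \<ge> 1"
  have "bdd_below (OS i)" using OS_lower[OF i] by (auto simp: bdd_below_def)
  thus ?thesis unfolding OPT_OS using OS_mem[OF i] cInf_lower by blast
qed

lemma feasible: "sig i \<ge> 0"
proof (cases "i = 0")
  case True thus ?thesis by (simp add: sig_def oo0 cc_def)
next
  case False
  hence i: "i \<ge> 1" by simp
  have "xsq s i \<in> {xs. OPT \<alpha> xs > 0}" using OPT_pos[OF i] by simp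
  hence "ereal (alg_cost Alg (xsq s i) / OPT \<alpha> (xsq s i)) \<le> comp_ratio \<alpha> Alg"
    unfolding comp_ratio_def by (rule SUP_upper)
  hence "ereal (alg_cost Alg (xsq s i) / OPT \<alpha> (xsq s i)) \<le> ereal \<rho>" using cr by (rule order_trans)
  hence "alg_cost Alg (xsq s i) / OPT \<alpha> (xsq s i) \<le> \<rho>" by simp
  hence "cc i \<le> \<rho> * OPT \<alpha> (xsq s i)" using OPT_pos[OF i] alg_cost_eq by (simp add: field_simps)
  also have "\<dots> \<le> \<rho> * oo i" using OPT_le[OF i] rho0 by simp
  finally show ?thesis unfolding sig_def by simp
qed

end



locale mhl = alg +
  assumes valid: "mh_valid \<alpha> s \<rho>" and fails: "mh_fails \<alpha> s \<rho>"
begin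

definition "kk = (LEAST i. fails_in \<alpha> s \<rho> i)"
definition "zz j = (SOME z. mh_ok \<alpha> s \<rho> j (Z \<alpha> s \<rho> (j-1)) z)"
definition "ze j = (if 1 \<le> j \<and> j < kk then zz j else 0)"
definition "Qx j = fst (T \<alpha> s j) + ze j * LL \<alpha> s j * (-1)^j * tt"
definition "Qy j = snd (T \<alpha> s j) + ze j * LL \<alpha> s j"
definition "Gx j = Qx (Suc j) - Qx j"
definition "Gy j = Qy (Suc j) - Qy j"
definition "gn j = sqrt ((Gx j)^2 + (Gy j)^2)"
definition "rr j = \<rho> * (oo j - oo (j - 1))"

lemma kk_fails: "fails_in \<alpha> s \<rho> kk"
  using fails unfolding mh_fails_def kk_def by (metis LeastI)

lemma kk_ge1: "kk \<ge> 1" using kk_fails unfolding fails_in_def by simp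

lemma before_kk: "j < kk \<Longrightarrow> \<not> fails_in \<alpha> s \<rho> j"
  unfolding kk_def using not_less_Least by blast

lemma zz_ok: assumes "1 \<le> j" "j < kk" shows "mh_ok \<alpha> s \<rho> j (Z \<alpha> s \<rho> (j-1)) (zz j)"
proof -
  have "\<exists>z. mh_ok \<alpha> s \<rho> j (Z \<alpha> s \<rho> (j-1)) z" using before_kk[OF assms(2)] assms(1) unfolding fails_in_def by auto
  thus ?thesis unfolding zz_def by (rule someI_ex)
qed

lemma hl_pt_eq: "hl_pt \<alpha> s j z = (fst (T \<alpha> s j) + z * LL \<alpha> s j * (-1)^j * tt, snd (T \<alpha> s j) + z * LL \<alpha> s j)"
  unfolding hl_pt_def Tstep by simp

lemma Z_eq: assumes "j < kk" shows "Z \<alpha> s \<rho> j = (Qx j, Qy j)"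
proof (cases j)
  case 0 thus ?thesis by (simp add: Qx_def Qy_def ze_def T_def)
next
  case (Suc i)
  have "Z \<alpha> s \<rho> j = hl_pt \<alpha> s j (zz j)" unfolding Suc by (simp add: zz_def)
  thus ?thesis using assms Suc unfolding hl_pt_eq Qx_def Qy_def ze_def by simp
qed

lemma Q_kk: "Qx kk = fst (T \<alpha> s kk)" "Qy kk = snd (T \<alpha> s kk)"
  unfolding Qx_def Qy_def ze_def by auto

lemma ze0: "ze j \<ge> 0"
proof (cases "1 \<le> j \<and> j < kk")
  case True thus ?thesis using zz_ok[of j] unfolding ze_def mh_ok_def by auto
next
  case False thus ?thesis unfolding ze_def by auto
qed

lemma in_dom: "j < kk \<Longrightarrow> in_domain \<alpha> s \<rho> j"
  unfolding in_domain_def using before_kk by auto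

lemma sgnZ: "1 \<le> j \<Longrightarrow> j < kk \<Longrightarrow> sgn (Qx j) = sgn (fst (T \<alpha> s j))"
  using valid in_dom Z_eq unfolding mh_valid_def by (metis fst_conv)

lemma ze_bound1: "ze 1 * s < 1"
proof (cases "1 < kk")
  case True
  have "Qx 1 = 1 - ze 1 * s" unfolding Qx_def using cot_mult by (simp add: T_def LL_def algebra_simps)
  moreover have "sgn (Qx 1) = 1" using sgnZ[of 1] True by (simp add: T_def)
  ultimately show ?thesis by (simp add: sgn_1_pos)
next
  case False thus ?thesis unfolding ze_def by simp
qed

lemma ze_bound2: assumes "j \<ge> 2" shows "ze j * (1 + s) < 1"
proof (cases "j < kk")
  case True
  obtain n where j: "j = n + 2" using assms by (metis add.commute le_Suc_ex)
  define a where "a = (-1)^n * s^n * (1 - s)"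
  have Tj: "fst (T \<alpha> s j) = a" unfolding a_def j by (simp add: T_def negpow)
  have "Qx j = a * (1 - ze j * (1 + s))"
  proof -
    have "ze j * LL \<alpha> s j * (-1)^j * tt = ze j * (-1)^n * s^n * (s^2 - 1) * (cot \<alpha> * tt)"
      unfolding j LL_def by (simp add: algebra_simps)
    thus ?thesis unfolding Qx_def Tj unfolding cot_mult a_def by (simp add: algebra_simps power2_eq_square)
  qed
  moreover have "a \<noteq> 0" unfolding a_def using s1 by simp
  moreover have "sgn (Qx j) = sgn a" using sgnZ[of j] True assms Tj by simp
  ultimately have "sgn (1 - ze j * (1 + s)) = 1"
    by (simp add: sgn_mult) (metis mult.right_neutral mult_cancel_left sgn_0_0 sgn_eq_0_iff)
  thus ?thesis by (simp add: sgn_1_pos)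
next
  case False thus ?thesis unfolding ze_def by simp
qed

lemma ze_lt1: "ze j < 1"
proof -
  consider "j = 0" | "j = 1" | "j \<ge> 2" by linarith
  thus ?thesis
  proof cases
    case 1 thus ?thesis unfolding ze_def by simp
  next
    case 2 thus ?thesis using ze_bound1 ze0[of 1] s1
      by (metis less_le_trans mult_le_cancel_left1 less_imp_le not_le mult.commute)
  next
    case 3 thus ?thesis using ze_bound2[OF 3] ze0[of j] s1
      by (smt (verit, best) mult_le_cancel_left1)
  qed
qed

lemma GxGy:
  "Gx j = (1 - ze j) * LL \<alpha> s j * (-1)^j * tt + ze (Suc j) * LL \<alpha> s (Suc j) * (-1)^(Suc j) * tt"
  "Gy j = (1 - ze j) * LL \<alpha> s j + ze (Suc j) * LL \<alpha> s (Suc j)"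
  unfolding Gx_def Gy_def Qx_def Qy_def Tstep by (simp_all add: algebra_simps)

lemma rr_eq: assumes "1 \<le> j" "j < kk" shows "rr j = gn (j - 1)"
proof -
  have ok: "edist (hl_pt \<alpha> s j (zz j)) (Z \<alpha> s \<rho> (j-1)) = \<rho> * (o_cost \<alpha> s j - o_cost \<alpha> s (j - 1))"
    using zz_ok[OF assms] unfolding mh_ok_def by simp
  have "hl_pt \<alpha> s j (zz j) = (Qx j, Qy j)" using assms unfolding hl_pt_eq Qx_def Qy_def ze_def by simp
  moreover have "Z \<alpha> s \<rho> (j-1) = (Qx (j-1), Qy (j-1))" using assms by (intro Z_eq) auto
  moreover have "Suc (j - 1) = j" using assms by simp
  ultimately have "gn (j - 1) = edist (hl_pt \<alpha> s j (zz j)) (Z \<alpha> s \<rho> (j-1))"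
    unfolding gn_def Gx_def Gy_def edist_def by simp
  thus ?thesis using ok unfolding rr_def oo_def by simp
qed

lemma fail_gap: "rr kk < gn (kk - 1)"
proof (rule ccontr)
  assume "\<not> rr kk < gn (kk - 1)"
  hence le: "gn (kk - 1) \<le> rr kk" by simp
  define i where "i = kk - 1"
  have ki: "kk = Suc i" unfolding i_def using kk_ge1 by simp
  have km: "kk - 1 = i" by (simp add: i_def)
  have "i < kk" using ki by simp
  hence Zi: "Z \<alpha> s \<rho> (kk - 1) = (Qx i, Qy i)" unfolding km by (rule Z_eq)
  define f where "f z = edist (hl_pt \<alpha> s kk z) (Qx i, Qy i)" for z
  have f0: "f 0 = gn i" unfolding f_def hl_pt_eq gn_def Gx_def Gy_def edist_def ki[symmetric]
    by (simp add: Q_kk)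
  have "ze (Suc i) = 0" using ki by (simp add: ze_def)
  hence "Gy i = (1 - ze i) * LL \<alpha> s i" unfolding GxGy by simp
  hence Gy0: "Gy i \<ge> 0" using ze_lt1[of i] LL_pos[of i] by simp
  define b where "b = \<bar>rr kk\<bar> / LL \<alpha> s kk"
  have b0: "b \<ge> 0" unfolding b_def using LL_pos[of kk] by simp
  have "f b \<ge> snd (T \<alpha> s kk) + b * LL \<alpha> s kk - Qy i"
    unfolding f_def hl_pt_eq edist_def by simp
  moreover have "snd (T \<alpha> s kk) - Qy i = Gy i" unfolding Gy_def ki[symmetric] Q_kk by simp
  moreover have "b * LL \<alpha> s kk = \<bar>rr kk\<bar>" unfolding b_def using LL_pos[of kk] by simp
  ultimately have fb: "f b \<ge> rr kk" using Gy0 by linarith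
  have cont: "\<forall>z. 0 \<le> z \<and> z \<le> b \<longrightarrow> isCont f z"
    unfolding f_def hl_pt_eq edist_def by (auto intro!: continuous_intros)
  obtain z where z: "0 \<le> z" "f z = rr kk" using IVT[of f 0 "rr kk" b] f0 le fb b0 cont km by auto
  have "mh_ok \<alpha> s \<rho> kk (Z \<alpha> s \<rho> (kk - 1)) z" unfolding mh_ok_def Zi using z
    unfolding f_def rr_def oo_def by simp
  thus False using kk_fails unfolding fails_in_def by blast
qed

end



lemma cs2: "a1*b1 + a2*b2 \<le> sqrt (a1^2 + a2^2) * sqrt (b1^2 + b2^2)"
proof -
  have "(a1*b1 + a2*b2)^2 \<le> (a1^2 + a2^2) * (b1^2 + b2^2)"
  proof -
    have "(a1^2 + a2^2) * (b1^2 + b2^2) - (a1*b1 + a2*b2)^2 = (a1*b2 - a2*b1)^2"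
      by (simp add: algebra_simps power2_eq_square)
    thus ?thesis by (metis diff_ge_0_iff_ge zero_le_power2)
  qed
  hence "a1*b1 + a2*b2 \<le> sqrt ((a1^2 + a2^2) * (b1^2 + b2^2))" by (rule real_le_rsqrt)
  thus ?thesis by (simp add: real_sqrt_mult)
qed

lemma key_coord:
  fixes \<sigma> t A B C D dx dy s0 :: real
  assumes sg: "\<sigma> = 1 \<or> \<sigma> = -1" and t: "0 < t" "t \<le> 1"
    and A: "A > 0" and B: "B \<ge> 0" and C: "C > 0" and D: "D \<ge> 0" and BD: "B*D \<le> A*C"
    and nd: "A*(1-t^2) + B*(1+t^2) > 0" and cn: "\<bar>dx\<bar> \<le> t*dy" and s0: "s0 \<ge> 0"
    and H: "sqrt ((\<sigma>*t*(B-A))^2 + (A+B)^2) * s0 \<le> \<sigma>*t*(B-A)*(\<sigma>*t*B - dx) + (A+B)*(B - dy)"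
  shows "sqrt ((\<sigma>*t*(C-D))^2 + (C+D)^2) * s0 \<le> \<sigma>*t*(C-D)*(\<sigma>*t*B - dx) + (C+D)*(B - dy)"
proof -
  define p where "p = (dy - \<sigma>*dx/t)/2"
  define q where "q = (dy + \<sigma>*dx/t)/2"
  have ss: "\<sigma>*\<sigma> = 1" using sg by auto
  have dxe: "dx = \<sigma>*t*(q - p)" unfolding p_def q_def using t ss
    by (simp add: field_simps)
  have dye: "dy = p + q" unfolding p_def q_def by (simp add: field_simps)
  have p0: "p \<ge> 0"
  proof -
    have "\<sigma>*dx \<le> \<bar>dx\<bar>" using sg by auto
    hence "\<sigma>*dx/t \<le> dy" using cn t by (simp add: divide_le_eq mult.commute)
    thus ?thesis unfolding p_def by simp
  qed
  define N where "N = 1 + t^2"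
  define M where "M = 1 - t^2"
  have i1: "(\<sigma>*t*(B-A))^2 + (A+B)^2 = A^2*N + 2*A*B*M + B^2*N"
    using sg unfolding N_def M_def by (auto simp: algebra_simps power2_eq_square)
  have i2: "(\<sigma>*t*(C-D))^2 + (C+D)^2 = C^2*N + 2*C*D*M + D^2*N"
    using sg unfolding N_def M_def by (auto simp: algebra_simps power2_eq_square)
  have i3: "\<sigma>*t*(B-A)*(\<sigma>*t*B - dx) + (A+B)*(B - dy) = -p*(A*N+B*M) + (B - q)*(A*M+B*N)"
    using sg unfolding dxe dye N_def M_def by (auto simp: algebra_simps power2_eq_square)
  have i4: "\<sigma>*t*(C-D)*(\<sigma>*t*B - dx) + (C+D)*(B - dy) = -p*(C*M+D*N) + (B - q)*(C*N+D*M)"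
    using sg unfolding dxe dye N_def M_def by (auto simp: algebra_simps power2_eq_square)
  show ?thesis unfolding i2 i4
    by (rule key_scalar[OF N_def M_def t A B C D BD _ p0 s0])
       (use nd H i1 i3 in \<open>simp_all add: N_def M_def\<close>)
qed

lemma deg_coord:
  fixes \<sigma> A A' B' U1 U2 dx dy s0 s1 :: real
  assumes sg: "\<sigma> = 1 \<or> \<sigma> = -1" and A: "A > 0" and A': "A' > 0" and B': "B' \<ge> 0"
    and Dc: "\<bar>dx\<bar> \<le> dy" and s0: "s0 \<ge> 0" and s1: "s1 \<ge> 0"
    and H1: "sqrt ((-\<sigma>*A)^2 + A^2) * s0 \<le> (-\<sigma>*A)*U1 + A*U2"
    and H2: "s1 = s0 + sqrt ((-\<sigma>*A)^2 + A^2) - sqrt ((dx - \<sigma>*A + U1)^2 + (dy + A + U2)^2)"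
    and H3: "(U1 = 0 \<and> U2 = 0) \<or> sqrt ((\<sigma>*(A'-B'))^2 + (A'+B')^2) * s0 \<le> \<sigma>*(A'-B')*U1 + (A'+B')*U2"
  shows "dx = 0 \<and> dy = 0 \<and> s1 = 0"
  using sg
proof
  assume "\<sigma> = 1"
  thus ?thesis using deg1[OF A A' B' Dc s0 s1, of U1 U2] H1 H2 H3 by simp
next
  assume m: "\<sigma> = -1"
  have h1: "sqrt (A^2 + A^2) * s0 \<le> (-A)*(-U1) + A*U2" using H1 m by simp
  have e: "(dx - \<sigma>*A + U1)^2 = ((-dx) - A + (-U1))^2" using m by (simp add: power2_eq_square algebra_simps)
  have h2: "s1 = s0 + sqrt (A^2 + A^2) - sqrt (((-dx) - A + (-U1))^2 + (dy + A + U2)^2)"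
    using H2 m unfolding e by simp
  have e2: "(\<sigma>*(A'-B'))^2 = (A'-B')^2" using m by (simp add: power2_eq_square algebra_simps)
  have h3: "(-U1 = 0 \<and> U2 = 0) \<or> sqrt ((A'-B')^2 + (A'+B')^2) * s0 \<le> (A'-B')*(-U1) + (A'+B')*U2"
    using H3 m unfolding e2 by (simp add: algebra_simps)
  have "\<bar>-dx\<bar> \<le> dy" using Dc by simp
  from deg1[OF A A' B' this s0 s1 h1 h2 h3] show ?thesis by simp
qed

lemma sgn_pow: "((-1::real)^n = 1 \<or> (-1::real)^n = -1)"
  by (cases "even n") auto

context mhl
begin

abbreviation "Px j \<equiv> fst (PP j)"
abbreviation "Py j \<equiv> snd (PP j)"

definition "Inv j \<longleftrightarrow> gn j * sig j \<le> Gx j * (Qx j - Px j) + Gy j * (Qy j - Py j)"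
definition "PreF j \<longleftrightarrow> gn (j-1) * sig j \<le> Gx (j-1) * (Qx j - Px j) + Gy (j-1) * (Qy j - Py j)
     + gn (j-1) * (rr j - gn (j-1))"

lemma gn_sq: "(gn j)^2 = (Gx j)^2 + (Gy j)^2" unfolding gn_def by simp
lemma gn_nonneg: "gn j \<ge> 0" unfolding gn_def by simp

lemma pre_step: assumes "Inv j" shows "PreF (Suc j)"
proof -
  define V1 where "V1 = Px (Suc j) - Px j"
  define V2 where "V2 = Py (Suc j) - Py j"
  have ed: "edist (PP j) (PP (Suc j)) = sqrt (V1^2 + V2^2)"
    unfolding edist_def V1_def V2_def by (simp add: power2_commute)
  have sS: "sig (Suc j) = sig j + rr (Suc j) - sqrt (V1^2 + V2^2)"
    using sig_Suc ed unfolding rr_def by simp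
  have cs: "Gx j * V1 + Gy j * V2 \<le> gn j * sqrt (V1^2 + V2^2)" unfolding gn_def by (rule cs2)
  have "gn j * sig (Suc j) = gn j * sig j + gn j * rr (Suc j) - gn j * sqrt (V1^2 + V2^2)"
    unfolding sS by (simp add: algebra_simps)
  also have "\<dots> \<le> Gx j * (Qx j - Px j) + Gy j * (Qy j - Py j) + gn j * rr (Suc j) - (Gx j * V1 + Gy j * V2)"
    using assms cs unfolding Inv_def by linarith
  also have "\<dots> = Gx j * (Qx (Suc j) - Px (Suc j)) + Gy j * (Qy (Suc j) - Py (Suc j)) + gn j * (rr (Suc j) - gn j)"
    using gn_sq[of j] unfolding V1_def V2_def Gx_def Gy_def by (simp add: algebra_simps power2_eq_square)
  finally show ?thesis unfolding PreF_def by simp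
qed

end



lemma core1:
  fixes x y s :: real
  assumes "x \<ge> 0" "y \<ge> 0" "s > 1" "x*s < 1" "y*(1+s) < 1"
  shows "x*y*(s^2-1) \<le> (1 - 0)*(1-x)"
proof -
  have "x*y*(s^2-1) = (x*(s-1))*(y*(1+s))" by (simp add: algebra_simps power2_eq_square)
  also have "\<dots> \<le> (x*(s-1))*1" using assms by (intro mult_left_mono) auto
  finally show ?thesis using assms by (simp add: algebra_simps)
qed

lemma core2:
  fixes w x y s :: real
  assumes "w \<ge> 0" "x \<ge> 0" "y \<ge> 0" "s > 1" "w*s < 1" "x*(1+s) < 1" "y*(1+s) < 1"
  shows "x*y*(s^2-1) \<le> (1 - w)*(1-x)"
proof -
  have "x*y*(s^2-1) = (x*(s-1))*(y*(1+s))" by (simp add: algebra_simps power2_eq_square)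
  also have "\<dots> \<le> (x*(s-1))*1" using assms by (intro mult_left_mono) auto
  finally have l: "x*y*(s^2-1) \<le> x*(s-1)" by simp
  have "x \<le> x*(1+s)" using assms by (simp add: algebra_simps)
  hence x1: "x \<le> 1" using assms by linarith
  have "s*(1-w) \<ge> s - 1" using assms by (simp add: algebra_simps)
  hence "s*(1-w)*(1-x) \<ge> (s-1)*(1-x)" using assms x1 by (intro mult_right_mono) auto
  moreover have "(s-1)*(1-x) \<ge> (s-1)*(s*x)" using assms by (intro mult_left_mono) (auto simp: algebra_simps)
  ultimately have "s*((1-w)*(1-x)) \<ge> s*(x*(s-1))" by (simp add: algebra_simps)
  hence "(1-w)*(1-x) \<ge> x*(s-1)" using assms by simp
  thus ?thesis using l by linarith
qed

lemma core3:
  fixes w x y s :: real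
  assumes "w \<ge> 0" "x \<ge> 0" "y \<ge> 0" "s > 1" "w*(1+s) < 1" "x*(1+s) < 1" "y*(1+s) < 1"
  shows "x*y*s^2 \<le> (1 - w)*(1-x)"
proof -
  have "x \<le> x*(1+s)" using assms by (simp add: algebra_simps)
  hence x1: "x \<le> 1" using assms by linarith
  have "(1+s)*(x*y*s^2) = (x*s^2)*(y*(1+s))" by (simp add: algebra_simps)
  also have "\<dots> \<le> (x*s^2)*1" using assms by (intro mult_left_mono) auto
  also have "\<dots> = s*(x*s)" by (simp add: power2_eq_square)
  also have "\<dots> \<le> s*(1-x)" using assms by (intro mult_left_mono) (auto simp: algebra_simps)
  also have "\<dots> \<le> ((1+s)*(1-w))*(1-x)" using assms x1 by (intro mult_right_mono) (auto simp: algebra_simps)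
  finally have "(1+s)*(x*y*s^2) \<le> (1+s)*((1-w)*(1-x))" by (simp add: algebra_simps)
  thus ?thesis using assms by simp
qed

context mhl
begin

lemma ze_s: "ze j * s < 1"
proof -
  consider "j = 0" | "j = 1" | "j \<ge> 2" by linarith
  thus ?thesis
  proof cases
    case 1 thus ?thesis unfolding ze_def by simp
  next
    case 2 thus ?thesis using ze_bound1 by simp
  next
    case 3
    have "ze j * s \<le> ze j * (1+s)" using ze0[of j] by (simp add: algebra_simps)
    thus ?thesis using ze_bound2[OF 3] by linarith
  qed
qed

lemma BD_AC:
  assumes J: "1 \<le> J"
  shows "(ze J * LL \<alpha> s J) * (ze (Suc J) * LL \<alpha> s (Suc J))
         \<le> ((1 - ze (J-1)) * LL \<alpha> s (J-1)) * ((1 - ze J) * LL \<alpha> s J)"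
proof -
  obtain \<kappa> where k: "LL \<alpha> s (Suc J) = \<kappa> * LL \<alpha> s (J-1)"
    and c: "ze J * ze (Suc J) * \<kappa> \<le> (1 - ze (J-1)) * (1 - ze J)"
  proof -
    consider "J = 1" | "J = 2" | "J \<ge> 3" using J by linarith
    thus ?thesis
    proof cases
      case 1
      have "LL \<alpha> s (Suc J) = (s^2-1) * LL \<alpha> s (J-1)" using 1 by (simp add: LL_def)
      moreover have "ze J * ze (Suc J) * (s^2-1) \<le> (1 - ze (J-1)) * (1 - ze J)"
        using core1[OF ze0 ze0 s1, of J "Suc J"] ze_s[of J] ze_bound2[of "Suc J"] 1
        by (simp add: ze_def)
      ultimately show ?thesis using that by blast
    next
      case 2
      have "LL \<alpha> s (Suc J) = (s^2-1) * LL \<alpha> s (J-1)" using 2 by (simp add: LL_def algebra_simps)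
      moreover have "ze J * ze (Suc J) * (s^2-1) \<le> (1 - ze (J-1)) * (1 - ze J)"
        using core2[OF ze0 ze0 ze0 s1, of "J-1" J "Suc J"] ze_s[of "J-1"] ze_bound2[of "Suc J"] ze_bound2[of J] 2
        by simp
      ultimately show ?thesis using that by blast
    next
      case 3
      then obtain n where n: "J = n + 3" by (metis add.commute le_Suc_ex)
      have "LL \<alpha> s (Suc J) = s^2 * LL \<alpha> s (J-1)" using n by (simp add: LL_def algebra_simps power_add power2_eq_square)
      moreover have "ze J * ze (Suc J) * s^2 \<le> (1 - ze (J-1)) * (1 - ze J)"
        using core3[OF ze0 ze0 ze0 s1, of "J-1" J "Suc J"] ze_bound2[of "Suc J"] ze_bound2[of J] ze_bound2[of "J-1"] n
        by simp
      ultimately show ?thesis using that by blast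
    qed
  qed
  have pos: "LL \<alpha> s (J-1) * LL \<alpha> s J > 0" using LL_pos by simp
  have "(ze J * LL \<alpha> s J) * (ze (Suc J) * LL \<alpha> s (Suc J)) = (ze J * ze (Suc J) * \<kappa>) * (LL \<alpha> s (J-1) * LL \<alpha> s J)"
    unfolding k by (simp add: algebra_simps)
  also have "\<dots> \<le> ((1 - ze (J-1)) * (1 - ze J)) * (LL \<alpha> s (J-1) * LL \<alpha> s J)"
    using c pos by (intro mult_right_mono) auto
  also have "\<dots> = ((1 - ze (J-1)) * LL \<alpha> s (J-1)) * ((1 - ze J) * LL \<alpha> s J)" by (simp add: algebra_simps)
  finally show ?thesis .
qed

end



context mhl
begin

lemma sig0: "sig 0 = 0" unfolding sig_def cc_def by (simp add: oo0)

lemma Inv0: "Inv 0"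
proof -
  have "Qx 0 = 0" "Qy 0 = 0" unfolding Qx_def Qy_def ze_def by (simp_all add: T_def)
  thus ?thesis unfolding Inv_def sig0 using PP0 by simp
qed

lemma pw1: "(-1::real)^(Suc n) = - ((-1)^n)" by simp

lemma step:
  assumes J: "Suc j < kk" and I: "Inv j" and P: "j = 0 \<or> PreF j"
  shows "Inv (Suc j) \<and> PreF (Suc j)"
proof -
  define J where "J = Suc j"
  have PF: "PreF J" unfolding J_def using pre_step[OF I] .
  have rJ: "rr J = gn j" using rr_eq[of J] J unfolding J_def by simp
  have H: "gn j * sig J \<le> Gx j * (Qx J - Px J) + Gy j * (Qy J - Py J)"
    using PF rJ unfolding PreF_def J_def by simp
  define \<sigma> :: real where "\<sigma> = (-1)^J"
  have sg: "\<sigma> = 1 \<or> \<sigma> = -1" unfolding \<sigma>_def by (rule sgn_pow)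
  have pj: "(-1::real)^j = - \<sigma>" unfolding \<sigma>_def J_def by simp
  have pJ1: "(-1::real)^(Suc J) = - \<sigma>" unfolding \<sigma>_def by simp
  define A where "A = (1 - ze j) * LL \<alpha> s j"
  define B where "B = ze J * LL \<alpha> s J"
  define C where "C = (1 - ze J) * LL \<alpha> s J"
  define D where "D = ze (Suc J) * LL \<alpha> s (Suc J)"
  have A0: "A > 0" unfolding A_def using ze_lt1[of j] LL_pos[of j] by simp
  have B0: "B \<ge> 0" unfolding B_def using ze0[of J] LL_pos[of J] by simp
  have C0: "C > 0" unfolding C_def using ze_lt1[of J] LL_pos[of J] by simp
  have D0: "D \<ge> 0" unfolding D_def using ze0[of "Suc J"] LL_pos[of "Suc J"] by simp
  have Gxj: "Gx j = \<sigma>*tt*(B - A)" unfolding GxGy A_def B_def J_def[symmetric] pj unfolding \<sigma>_def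
    by (simp add: algebra_simps)
  have Gyj: "Gy j = A + B" unfolding GxGy A_def B_def J_def by simp
  have GxJ: "Gx J = \<sigma>*tt*(C - D)" unfolding GxGy C_def D_def pJ1 unfolding \<sigma>_def
    by (simp add: algebra_simps)
  have GyJ: "Gy J = C + D" unfolding GxGy C_def D_def by simp
  define dx where "dx = Px J - fst (T \<alpha> s J)"
  define dy where "dy = Py J - snd (T \<alpha> s J)"
  have QxJ: "Qx J - Px J = \<sigma>*tt*B - dx" unfolding Qx_def dx_def B_def \<sigma>_def by (simp add: algebra_simps)
  have QyJ: "Qy J - Py J = B - dy" unfolding Qy_def dy_def B_def by simp
  have cn: "\<bar>dx\<bar> \<le> tt * dy" unfolding dx_def dy_def using PP_cone[of J] J_def by simp
  have sJ: "sig J \<ge> 0" by (rule feasible)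
  have sj: "sig j \<ge> 0" by (rule feasible)
  have "Inv J"
  proof (cases "tt = 1 \<and> ze J = 0")
    case False
    have nd: "A*(1-tt^2) + B*(1+tt^2) > 0"
    proof (cases "tt = 1")
      case True
      hence "ze J > 0" using False ze0[of J] by simp
      hence "B > 0" unfolding B_def using LL_pos[of J] by simp
      thus ?thesis using True by simp
    next
      case False
      hence "tt < 1" using tt_le1 by simp
      hence "tt*tt < 1*1" using tt_pos by (intro mult_strict_mono) auto
      hence "tt^2 < 1" by (simp add: power2_eq_square)
      hence "A*(1-tt^2) > 0" using A0 by simp
      moreover have "B*(1+tt^2) \<ge> 0" using B0 by simp
      ultimately show ?thesis by linarith
    qed
    have BD: "B*D \<le> A*C" using BD_AC[of J] unfolding A_def B_def C_def D_def J_def by simp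
    have H': "sqrt ((\<sigma>*tt*(B-A))^2 + (A+B)^2) * sig J \<le> \<sigma>*tt*(B-A)*(\<sigma>*tt*B - dx) + (A+B)*(B - dy)"
      using H unfolding gn_def Gxj Gyj QxJ QyJ by simp
    have "sqrt ((\<sigma>*tt*(C-D))^2 + (C+D)^2) * sig J \<le> \<sigma>*tt*(C-D)*(\<sigma>*tt*B - dx) + (C+D)*(B - dy)"
      by (rule key_coord[OF sg tt_pos tt_le1 A0 B0 C0 D0 BD nd cn sJ H'])
    thus ?thesis unfolding Inv_def gn_def GxJ GyJ QxJ QyJ .
  next
    case True
    hence t1: "tt = 1" and zJ: "ze J = 0" by auto
    have Bz: "B = 0" unfolding B_def zJ by simp
    define U1 where "U1 = Qx j - Px j"
    define U2 where "U2 = Qy j - Py j"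
    have H1: "sqrt ((-\<sigma>*A)^2 + A^2) * sig j \<le> (-\<sigma>*A)*U1 + A*U2"
      using I unfolding Inv_def gn_def Gxj Gyj Bz t1 U1_def U2_def by simp
    have QxJT: "Qx J = fst (T \<alpha> s J)" and QyJT: "Qy J = snd (T \<alpha> s J)"
      unfolding Qx_def Qy_def zJ by simp_all
    have Qxj: "Qx j = fst (T \<alpha> s J) + \<sigma>*A"
      using Gxj unfolding Gx_def J_def[symmetric] QxJT Bz t1 by simp
    have Qyj: "Qy j = snd (T \<alpha> s J) - A"
      using Gyj unfolding Gy_def J_def[symmetric] QyJT Bz by simp
    have ed: "edist (PP j) (PP J) = sqrt ((dx - \<sigma>*A + U1)^2 + (dy + A + U2)^2)"
    proof -
      have "dx - \<sigma>*A + U1 = Px J - Px j" unfolding dx_def U1_def Qxj by simp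
      moreover have "dy + A + U2 = Py J - Py j" unfolding dy_def U2_def Qyj by simp
      ultimately show ?thesis unfolding edist_def by (simp add: power2_commute)
    qed
    have gnj: "gn j = sqrt ((-\<sigma>*A)^2 + A^2)" unfolding gn_def Gxj Gyj Bz t1 by simp
    have H2: "sig J = sig j + sqrt ((-\<sigma>*A)^2 + A^2) - sqrt ((dx - \<sigma>*A + U1)^2 + (dy + A + U2)^2)"
      using sig_Suc[of j] rJ gnj ed unfolding J_def[symmetric] rr_def by (simp add: J_def)
    define A' where "A' = (1 - ze (j-1)) * LL \<alpha> s (j-1)"
    define B' where "B' = ze j * LL \<alpha> s j"
    have A'0: "A' > 0" unfolding A'_def using ze_lt1[of "j-1"] LL_pos[of "j-1"] by simp
    have B'0: "B' \<ge> 0" unfolding B'_def using ze0[of j] LL_pos[of j] by simp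
    have H3: "(U1 = 0 \<and> U2 = 0) \<or> sqrt ((\<sigma>*(A'-B'))^2 + (A'+B')^2) * sig j \<le> \<sigma>*(A'-B')*U1 + (A'+B')*U2"
      using P
    proof
      assume "j = 0"
      hence "Qx j = 0" "Qy j = 0" unfolding Qx_def Qy_def ze_def by (simp_all add: T_def)
      thus ?thesis using \<open>j = 0\<close> PP0 unfolding U1_def U2_def by simp
    next
      assume Pj: "PreF j"
      show ?thesis
      proof (cases "j = 0")
        case True
        hence "Qx j = 0" "Qy j = 0" unfolding Qx_def Qy_def ze_def by (simp_all add: T_def)
        thus ?thesis using True PP0 unfolding U1_def U2_def by simp
      next
        case False
        hence j1: "1 \<le> j" by simp
        have rj: "rr j = gn (j-1)" using rr_eq[of j] j1 J by simp
        have sj1: "Suc (j - 1) = j" using j1 by simp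
        have pjm: "(-1::real)^(j-1) = \<sigma>" unfolding \<sigma>_def J_def using j1
          by (metis pw1 sj1 minus_minus)
        have Gxj1: "Gx (j-1) = \<sigma>*(A'-B')" unfolding GxGy sj1 A'_def B'_def pjm pj t1
          by (simp add: algebra_simps)
        have Gyj1: "Gy (j-1) = A'+B'" unfolding GxGy sj1 A'_def B'_def by simp
        have "gn (j-1) * sig j \<le> Gx (j-1) * U1 + Gy (j-1) * U2"
          using Pj rj unfolding PreF_def U1_def U2_def by simp
        thus ?thesis unfolding gn_def Gxj1 Gyj1 by simp
      qed
    qed
    have "dx = 0 \<and> dy = 0 \<and> sig J = 0"
      using t1 cn by (intro deg_coord[OF sg A0 A'0 B'0 _ sj sJ H1 H2 H3]) simp
    thus ?thesis unfolding Inv_def QxJ QyJ Bz by simp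
  qed
  thus ?thesis using PF unfolding J_def by simp
qed

lemma all_inv: "j < kk \<Longrightarrow> Inv j \<and> (j = 0 \<or> PreF j)"
proof (induction j)
  case 0 thus ?case using Inv0 by simp
next
  case (Suc j)
  hence "Inv j \<and> (j = 0 \<or> PreF j)" by simp
  thus ?case using step[OF Suc.prems] by simp
qed

lemma contradiction: False
proof -
  define i where "i = kk - 1"
  have ki: "kk = Suc i" unfolding i_def using kk_ge1 by simp
  have "Inv i" using all_inv[of i] ki by simp
  hence PF: "PreF kk" using pre_step ki by simp
  have zk: "ze kk = 0" unfolding ze_def by simp
  define A where "A = (1 - ze i) * LL \<alpha> s i"
  have A0: "A > 0" unfolding A_def using ze_lt1[of i] LL_pos[of i] by simp
  have Gx: "Gx i = A * (-1)^i * tt" unfolding GxGy ki[symmetric] zk A_def by simp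
  have Gy: "Gy i = A" unfolding GxGy ki[symmetric] zk A_def by simp
  define dx where "dx = Px kk - fst (T \<alpha> s kk)"
  define dy where "dy = Py kk - snd (T \<alpha> s kk)"
  have cn: "\<bar>dx\<bar> \<le> tt * dy" unfolding dx_def dy_def using PP_cone[of kk] kk_ge1 by simp
  have dy0: "dy \<ge> 0" using cn tt_pos by (metis abs_ge_zero order_trans zero_le_mult_iff not_le less_imp_le)
  have "\<bar>(-1)^i * tt * dx\<bar> \<le> dy"
  proof -
    have "\<bar>(-1)^i * tt * dx\<bar> = tt * \<bar>dx\<bar>" using tt_pos by (simp add: abs_mult power_abs)
    also have "\<dots> \<le> tt * (tt * dy)" using cn tt_pos by simp
    also have "\<dots> \<le> 1 * dy" using tt_le1 tt_pos dy0
      by (metis mult.assoc mult_right_mono mult_le_one less_imp_le)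
    finally show ?thesis by simp
  qed
  hence S: "(-1)^i * tt * dx + dy \<ge> 0" by linarith
  have "Gx i * (Qx kk - Px kk) + Gy i * (Qy kk - Py kk) = - A * ((-1)^i * tt * dx + dy)"
    unfolding Gx Gy Q_kk dx_def dy_def by (simp add: algebra_simps)
  also have "\<dots> \<le> 0" using A0 S by simp
  finally have neg: "Gx i * (Qx kk - Px kk) + Gy i * (Qy kk - Py kk) \<le> 0" .
  have "\<bar>Gy i\<bar> \<le> gn i" unfolding gn_def by (rule sqrt_ge_abs2)
  hence gpos: "gn i > 0" using A0 unfolding Gy by simp
  have gap: "rr kk < gn i" using fail_gap unfolding i_def .
  have "gn i * sig kk \<le> gn i * (rr kk - gn i)" using PF neg unfolding PreF_def i_def[symmetric] by linarith
  also have "\<dots> < 0" using gpos gap by (simp add: mult_pos_neg)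
  finally have "gn i * sig kk < 0" .
  moreover have "gn i * sig kk \<ge> 0" using gpos feasible[of kk] by simp
  ultimately show False by simp
qed

end

theorem lemma14:
  fixes \<alpha> s \<rho> :: real
  assumes "0 < \<alpha>" and "\<alpha> \<le> pi / 4" and "s > 1" and "\<rho> > 0"
    and "mh_valid \<alpha> s \<rho>"
    and "mh_fails \<alpha> s \<rho>"
  shows "\<forall>A. online_alg \<alpha> A \<longrightarrow> comp_ratio \<alpha> A > ereal \<rho>"
proof (intro allI impI)
  fix A assume oa: "online_alg \<alpha> A"
  show "comp_ratio \<alpha> A > ereal \<rho>"
  proof (rule ccontr)
    assume "\<not> comp_ratio \<alpha> A > ereal \<rho>"
    hence cr: "comp_ratio \<alpha> A \<le> ereal \<rho>" by simp
    interpret mhl \<alpha> s \<rho> A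
      using assms oa cr by unfold_locales auto
    show False by (rule contradiction)
  qed
qed

end
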